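(* Let $\hat{\mathbb{N}}$ be the set of odd integers $n\ge3$, and let $X,Y \subseteq \hat{\mathbb{N}}$ be non-empty. Then $\bigcap_{n \in X} \mathrm{pPol}\, R^{0,2}_n = \bigcap_{m \in Y} \mathrm{pPol}\, R^{0,2}_m$ if and only if $X = Y$.
   Context: Partial functions are on $\{0,1\}$: an $n$-ary partial function is a map $f:\operatorname{dom} f\to\{0,1\}$ with $\operatorname{dom} f\subseteq\{0,1\}^n$. For $\rho\subseteq\{0,1\}^h$, $\mathrm{pPol}\,\rho$ is the set of partial functions $f$ such that for every $h\times n$ matrix whose rows lie in $\operatorname{dom} f$ and whose columns lie in $\rho$, the column obtained by applying $f$ row-wise lies in $\rho$. Let $\rho_{0,2}=\{(0,0),(0,1),(1,0)\}$. For $n\ge2$, $R^{0,2}_{C,n}=\{(x_1,\dots,x_n)\in\{0,1\}^n: (x_i,x_{i+1})\in\rho_{0,2}\text{ for } i\in[n], \text{ with } x_{n+1}:=x_1\}$, $R^{0,2}_{K,n}=\{(x_1,\dots,x_n): (x_i,x_j)\in\rho_{0,2}\text{ for all } i\ne j\}$, and $R^{0,2}_n=R^{0,2}_{C,n}\times R^{0,2}_{K,n}\subseteq\{0,1\}^{2n}$. *)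

theory Defs
  imports Main
begin

text \<open>Tuples in {0,1}^n are represented as bool lists of length n (False = 0, True = 1).
  An n-ary partial function is a pair (n, f) with f :: bool list \<rightharpoonup> bool whose
  domain is contained in the set of lists of length n.\<close>

type_synonym pfun = "nat \<times> (bool list \<Rightarrow> bool option)"

definition is_pfun :: "pfun \<Rightarrow> bool" where
  "is_pfun F \<longleftrightarrow> dom (snd F) \<subseteq> {xs. length xs = fst F}"

text \<open>pPol of an h-ary relation rho (a set of bool lists of length h).
  A matrix with h rows is given as M :: nat \<Rightarrow> bool list (rows M 0, ..., M (h-1)).\<close>

definition pPol :: "nat \<Rightarrow> bool list set \<Rightarrow> pfun set" where
  "pPol h rho = {F. is_pfun F \<and>
     (\<forall>M :: nat \<Rightarrow> bool list.
        (\<forall>i<h. M i \<in> dom (snd F)) \<longrightarrow>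
        (\<forall>j<fst F. map (\<lambda>i. M i ! j) [0..<h] \<in> rho) \<longrightarrow>
        map (\<lambda>i. the (snd F (M i))) [0..<h] \<in> rho)}"

definition rho02 :: "bool list set" where
  "rho02 = {[False, False], [False, True], [True, False]}"

definition R02C :: "nat \<Rightarrow> bool list set" where
  "R02C n = {xs. length xs = n \<and>
     (\<forall>i<n. [xs ! i, xs ! ((i + 1) mod n)] \<in> rho02)}"

definition R02K :: "nat \<Rightarrow> bool list set" where
  "R02K n = {xs. length xs = n \<and>
     (\<forall>i<n. \<forall>j<n. i \<noteq> j \<longrightarrow> [xs ! i, xs ! j] \<in> rho02)}"

text \<open>R^{0,2}_n = R_C \<times> R_K \<subseteq> {0,1}^{2n}, as concatenation of tuples.\<close>

definition R02 :: "nat \<Rightarrow> bool list set" where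
  "R02 n = {xs @ ys | xs ys. xs \<in> R02C n \<and> ys \<in> R02K n}"

definition Nhat :: "nat set" where
  "Nhat = {n. odd n \<and> 3 \<le> n}"

end

theory Submission imports Defs begin

definition adj :: "nat \<Rightarrow> nat \<Rightarrow> nat \<Rightarrow> bool" where
  "adj n x y \<longleftrightarrow> x+1=y \<or> y+1=x \<or> (x=0 \<and> y+1=n) \<or> (y=0 \<and> x+1=n)"

definition av :: "nat \<Rightarrow> nat \<Rightarrow> bool list" where
  "av n k = map (\<lambda>p. p < n*n \<and> p div n = k) [0..<2*n*n]"

definition bv :: "nat \<Rightarrow> nat \<Rightarrow> bool list" where
  "bv n i = map (\<lambda>p. (p < n*n \<and> p mod n = i) \<or> (n*n \<le> p \<and> ((p-n*n) div n = i \<or> (p-n*n) mod n = i)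
      \<and> \<not> adj n ((p-n*n) div n) ((p-n*n) mod n))) [0..<2*n*n]"

definition disj :: "bool list \<Rightarrow> bool list \<Rightarrow> bool" where
  "disj u v \<longleftrightarrow> (\<forall>p<length u. \<not> (u!p \<and> v!p))"

lemma len_av[simp]: "length (av n k) = 2*n*n" by (simp add: av_def)
lemma len_bv[simp]: "length (bv n k) = 2*n*n" by (simp add: bv_def)

lemma av_nth: "p < 2*n*n \<Longrightarrow> av n k ! p = (p < n*n \<and> p div n = k)"
  by (simp add: av_def)
lemma bv_nth: "p < 2*n*n \<Longrightarrow> bv n i ! p = ((p < n*n \<and> p mod n = i) \<or> (n*n \<le> p \<and> ((p-n*n) div n = i \<or> (p-n*n) mod n = i)
      \<and> \<not> adj n ((p-n*n) div n) ((p-n*n) mod n)))"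
  by (simp add: bv_def)

lemma adj_sym: "adj n x y \<Longrightarrow> adj n y x" by (auto simp: adj_def)
lemma adj_irr: "n \<ge> 2 \<Longrightarrow> \<not> adj n x x" by (auto simp: adj_def)

lemma disj_aa: "k \<noteq> l \<Longrightarrow> disj (av n k) (av n l)"
  by (auto simp: disj_def av_nth)

lemma pos_lt: assumes "k < (n::nat)" "i < n" shows "k*n+i < n*n"
proof -
  have "k*n+i < k*n+n" using assms by linarith
  also have "\<dots> = (k+1)*n" by simp
  also have "\<dots> \<le> n*n" using assms by (metis Suc_eq_plus1 Suc_leI mult.commute mult_le_mono2 mult.commute)
  finally show ?thesis .
qed

lemma not_disj_ab: assumes "k < n" "i < n" shows "\<not> disj (av n k) (bv n i)" "\<not> disj (bv n i) (av n k)"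
proof -
  let ?p = "k*n+i"
  have p: "?p < n*n" using pos_lt[OF assms] .
  have "av n k ! ?p" "bv n i ! ?p" using p assms by (auto simp: av_nth bv_nth)
  moreover have "?p < 2*n*n" using p by simp
  ultimately show "\<not> disj (av n k) (bv n i)" "\<not> disj (bv n i) (av n k)" unfolding disj_def len_bv len_av by blast+
qed

lemma not_disj_bb: assumes "i < n" "j < n" "\<not> adj n i j" shows "\<not> disj (bv n i) (bv n j)"
proof -
  let ?p = "n*n + (i*n+j)"
  have p: "i*n+j < n*n" using pos_lt[OF assms(1,2)] .
  have d: "(i*n+j) div n = i" "(i*n+j) mod n = j" using assms by auto
  have "bv n i ! ?p" "bv n j ! ?p" using p d assms by (auto simp: bv_nth)
  moreover have "?p < 2*n*n" using p by simp
  ultimately show ?thesis unfolding disj_def len_bv len_av by blast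
qed

lemma disj_bb: assumes "adj n i j" "n \<ge> 2" shows "disj (bv n i) (bv n j)"
proof -
  have ij: "i \<noteq> j" using assms adj_irr by blast
  show ?thesis unfolding disj_def
  proof (intro allI impI notI)
    fix p assume p: "p < length (bv n i)" and h: "bv n i ! p \<and> bv n j ! p"
    then have p2: "p < 2*n*n" by simp
    show False
    proof (cases "p < n*n")
      case True then show ?thesis using h p2 ij by (auto simp: bv_nth)
    next
      case False
      let ?d = "(p-n*n) div n" and ?r = "(p-n*n) mod n"
      have "\<not> adj n ?d ?r" "(?d = i \<or> ?r = i)" "(?d = j \<or> ?r = j)" using h p2 False by (auto simp: bv_nth)
      then show ?thesis using ij assms(1) adj_sym by metis
    qed
  qed
qed

lemma not_disj_aa: "k < n \<Longrightarrow> \<not> disj (av n k) (av n k)"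
proof -
  assume k: "k < n"
  have p: "k*n < n*n" using pos_lt[OF k k] k by simp
  have "av n k ! (k*n)" using p k by (auto simp: av_nth)
  moreover have "k*n < 2*n*n" using p by simp
  ultimately show ?thesis unfolding disj_def len_bv len_av by blast
qed

lemma av_ne_bv: assumes "i < n" "n \<ge> 2" shows "av n k \<noteq> bv n i"
proof -
  let ?p = "n*n + (i*n+i)"
  have p: "i*n+i < n*n" using pos_lt[OF assms(1,1)] .
  have "bv n i ! ?p" using p assms adj_irr by (auto simp: bv_nth)
  moreover have "\<not> av n k ! ?p" using p by (auto simp: av_nth)
  ultimately show ?thesis by auto
qed

lemma triangle: "adj n x y \<Longrightarrow> adj n y z \<Longrightarrow> adj n x z \<Longrightarrow> n \<ge> 4 \<Longrightarrow> x < n \<Longrightarrow> y < n \<Longrightarrow> z < n \<Longrightarrow> False"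
  unfolding adj_def by arith


lemma wind:
  assumes adjs: "\<forall>i<m. adj n (x i) (x (Suc i))" and "x m = x 0" and "odd m" and "m < n"
  shows False
proof -
  have claim: "\<exists>s t::int. int (x i) = int (x 0) + s + int n * t \<and> \<bar>s\<bar> \<le> int i \<and> even (s + int i)"
    if "i \<le> m" for i
    using that
  proof (induction i)
    case 0 then show ?case by (intro exI[of _ 0]) simp
  next
    case (Suc i)
    then obtain s t where st: "int (x i) = int (x 0) + s + int n * t" "\<bar>s\<bar> \<le> int i" "even (s + int i)" by auto
    have a: "adj n (x i) (x (Suc i))" using adjs Suc.prems by auto
    then consider "x i + 1 = x (Suc i)" | "x (Suc i) + 1 = x i" | "x i = 0 \<and> x (Suc i) + 1 = n"
      | "x (Suc i) = 0 \<and> x i + 1 = n" unfolding adj_def by blast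
    then show ?case
    proof cases
      case 1 then show ?thesis using st by (intro exI[of _ "s+1"] exI[of _ t]) auto
    next
      case 2 then show ?thesis using st by (intro exI[of _ "s-1"] exI[of _ t]) auto
    next
      case 3 then show ?thesis using st by (intro exI[of _ "s-1"] exI[of _ "t+1"]) (auto simp: algebra_simps)
    next
      case 4 then show ?thesis using st by (intro exI[of _ "s+1"] exI[of _ "t-1"]) (auto simp: algebra_simps)
    qed
  qed
  obtain s t where st: "int (x m) = int (x 0) + s + int n * t" "\<bar>s\<bar> \<le> int m" "even (s + int m)"
    using claim by blast
  have e: "s = - (int n * t)" using st(1) assms(2) by simp
  have "t = 0"
  proof (rule ccontr)
    assume "t \<noteq> 0"
    then have "\<bar>t\<bar> \<ge> 1" by simp
    then have "\<bar>int n * t\<bar> \<ge> int n" by (simp add: abs_mult mult_le_cancel_left1)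
    then show False using e st(2) assms(4) by simp
  qed
  then show False using e st(3) assms(3) by simp
qed

lemma rho02_iff: "[a, b] \<in> rho02 \<longleftrightarrow> \<not> (a \<and> b)"
  by (cases a; cases b) (auto simp: rho02_def)

lemma col_R02:
  assumes "map (\<lambda>i. M i ! j) [0..<2*m] \<in> R02 m"
  shows "\<forall>i<m. \<not> (M i ! j \<and> M (Suc i mod m) ! j)"
    and "\<forall>i<m. \<forall>i'<m. i \<noteq> i' \<longrightarrow> \<not> (M (m+i) ! j \<and> M (m+i') ! j)"
proof -
  obtain xs ys where eq: "map (\<lambda>i. M i ! j) [0..<2*m] = xs @ ys" and xs: "xs \<in> R02C m" and ys: "ys \<in> R02K m"
    using assms unfolding R02_def by blast
  have lx: "length xs = m" using xs by (simp add: R02C_def)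
  have xn: "xs ! i = M i ! j" if "i < m" for i
  proof -
    have "xs ! i = (xs @ ys) ! i" using that lx by (simp add: nth_append)
    also have "\<dots> = M i ! j" using that by (simp flip: eq)
    finally show ?thesis .
  qed
  have yn: "ys ! i = M (m+i) ! j" if "i < m" for i
  proof -
    have "ys ! i = (xs @ ys) ! (m+i)" using that lx by (simp add: nth_append)
    also have "\<dots> = M (m+i) ! j" using that by (simp flip: eq)
    finally show ?thesis .
  qed
  show "\<forall>i<m. \<not> (M i ! j \<and> M (Suc i mod m) ! j)"
  proof (intro allI impI)
    fix i assume i: "i < m"
    have "[xs ! i, xs ! ((i+1) mod m)] \<in> rho02" using xs i by (simp add: R02C_def)
    moreover have "(i+1) mod m < m" using i by simp
    ultimately show "\<not> (M i ! j \<and> M (Suc i mod m) ! j)" using xn i by (simp add: rho02_iff)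
  qed
  show "\<forall>i<m. \<forall>i'<m. i \<noteq> i' \<longrightarrow> \<not> (M (m+i) ! j \<and> M (m+i') ! j)"
  proof (intro allI impI)
    fix i i' assume i: "i < m" "i' < m" "i \<noteq> i'"
    have "[ys ! i, ys ! i'] \<in> rho02" using ys i by (simp add: R02K_def)
    then show "\<not> (M (m+i) ! j \<and> M (m+i') ! j)" using yn i by (simp add: rho02_iff)
  qed
qed

lemma false_R02: "map (\<lambda>i. False) [0..<2*m] \<in> R02 m"
proof -
  have "map (\<lambda>i. False) [0..<2*m] = replicate m False @ replicate m False"
    by (simp add: map_replicate_const replicate_add[symmetric] mult_2)
  moreover have "replicate m False \<in> R02C m" by (simp add: R02C_def rho02_def)
  moreover have "replicate m False \<in> R02K m" by (simp add: R02K_def rho02_def)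
  ultimately show ?thesis unfolding R02_def by blast
qed

lemma true_notR02: assumes "n \<ge> 1" "\<forall>i<n. g i" shows "map g [0..<2*n] \<notin> R02 n"
proof
  assume "map g [0..<2*n] \<in> R02 n"
  then obtain xs ys where eq: "map g [0..<2*n] = xs @ ys" and xs: "xs \<in> R02C n"
    unfolding R02_def by blast
  have lx: "length xs = n" using xs by (simp add: R02C_def)
  have xn: "xs ! i = g i" if "i < n" for i
  proof -
    have "xs ! i = (xs @ ys) ! i" using that lx by (simp add: nth_append)
    also have "\<dots> = g i" using that by (simp flip: eq)
    finally show ?thesis .
  qed
  have "[xs ! 0, xs ! (Suc 0 mod n)] \<in> rho02" proof -
    have "0 < n" using assms(1) by simp
    then show ?thesis using xs unfolding R02C_def mem_Collect_eq by (metis add_0 One_nat_def)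
  qed
  moreover have "Suc 0 mod n < n" using assms(1) by simp
  ultimately show False using xn assms by (simp add: rho02_iff)
qed


definition gf :: "nat \<Rightarrow> bool list \<Rightarrow> bool option" where
  "gf n xs = (if xs \<in> av n ` {..<n} then Some False else if xs \<in> bv n ` {..<n} then Some True else None)"

definition fn :: "nat \<Rightarrow> pfun" where "fn n = (2*n*n, gf n)"

lemma dom_gf: "dom (gf n) = av n ` {..<n} \<union> bv n ` {..<n}"
  by (auto simp: gf_def dom_def split: if_splits)

lemma gf_a: "k < n \<Longrightarrow> gf n (av n k) = Some False" by (auto simp: gf_def)
lemma gf_b: "k < n \<Longrightarrow> n \<ge> 2 \<Longrightarrow> gf n (bv n k) = Some True"
  using av_ne_bv by (fastforce simp: gf_def)

lemma is_pfun_fn: "is_pfun (fn n)"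
  by (auto simp: is_pfun_def fn_def dom_gf)

lemma col_intro:
  assumes "\<forall>i<m. \<not> (M i ! j \<and> M (Suc i mod m) ! j)"
    and "\<forall>i<m. \<forall>i'<m. i \<noteq> i' \<longrightarrow> \<not> (M (m+i) ! j \<and> M (m+i') ! j)"
  shows "map (\<lambda>i. M i ! j) [0..<2*m] \<in> R02 m"
proof -
  let ?xs = "map (\<lambda>i. M i ! j) [0..<m]" and ?ys = "map (\<lambda>i. M (m+i) ! j) [0..<m]"
  have "map (\<lambda>i. M i ! j) [0..<2*m] = ?xs @ ?ys"
    by (auto simp: list_eq_iff_nth_eq nth_append)
  moreover have "?xs \<in> R02C m" using assms(1) by (auto simp: R02C_def rho02_iff)
  moreover have "?ys \<in> R02K m" using assms(2) by (auto simp: R02K_def rho02_iff)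
  ultimately show ?thesis unfolding R02_def by blast
qed

lemma fn_notin: assumes "n \<in> Nhat" shows "fn n \<notin> pPol (2*n) (R02 n)"
proof
  assume h: "fn n \<in> pPol (2*n) (R02 n)"
  have n: "n \<ge> 3" using assms by (simp add: Nhat_def)
  define M where "M i = (if i < n then bv n i else av n (i-n))" for i
  have rows: "\<forall>i<2*n. M i \<in> dom (snd (fn n))"
    by (auto simp: M_def fn_def dom_gf)
  have cols: "\<forall>j<fst (fn n). map (\<lambda>i. M i ! j) [0..<2*n] \<in> R02 n"
  proof (intro allI impI, rule col_intro)
    fix j assume j: "j < fst (fn n)"
    show "\<forall>i<n. \<not> (M i ! j \<and> M (Suc i mod n) ! j)"
    proof (intro allI impI)
      fix i assume i: "i < n"
      have "Suc i mod n = (if Suc i < n then Suc i else 0)" using i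
      proof (cases "Suc i < n")
        case False then have "Suc i = n" using i by simp
        then show ?thesis by simp
      qed simp
      then have a: "adj n i (Suc i mod n)" using i n
        by (cases "Suc i < n") (auto simp: adj_def)
      have "disj (bv n i) (bv n (Suc i mod n))" using disj_bb[OF a] n by simp
      then show "\<not> (M i ! j \<and> M (Suc i mod n) ! j)" using i j n
        by (auto simp: M_def disj_def fn_def)
    qed
    show "\<forall>i<n. \<forall>i'<n. i \<noteq> i' \<longrightarrow> \<not> (M (n+i) ! j \<and> M (n+i') ! j)"
      using j disj_aa by (auto simp: M_def disj_def fn_def)
  qed
  have "map (\<lambda>i. the (snd (fn n) (M i))) [0..<2*n] \<in> R02 n"
    using h rows cols unfolding pPol_def by blast
  moreover have "\<forall>i<n. the (snd (fn n) (M i))" using n by (auto simp: M_def fn_def gf_b)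
  ultimately show False using true_notR02[of n] n by simp
qed


lemma fn_in: assumes "n \<in> Nhat" "m \<in> Nhat" "m \<noteq> n" shows "fn n \<in> pPol (2*m) (R02 m)"
proof -
  have n: "n \<ge> 3" "odd n" and m: "m \<ge> 3" "odd m" using assms by (auto simp: Nhat_def)
  let ?A = "av n ` {..<n}" and ?B = "bv n ` {..<n}"
  have AB: "\<not> disj u v \<and> \<not> disj v u" if "u \<in> ?A" "v \<in> ?B" for u v
    using that not_disj_ab by blast
  have self: "\<not> disj u u" if "u \<in> ?A \<union> ?B" for u
    using that not_disj_aa not_disj_bb adj_irr n by force
  have same: "(u \<in> ?A \<longleftrightarrow> v \<in> ?A)" if "u \<in> ?A \<union> ?B" "v \<in> ?A \<union> ?B" "disj u v" for u v
    using that AB by blast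
  show ?thesis unfolding pPol_def mem_Collect_eq
  proof (intro conjI is_pfun_fn allI impI)
    fix M :: "nat \<Rightarrow> bool list"
    assume rows: "\<forall>i<2*m. M i \<in> dom (snd (fn n))"
      and cols: "\<forall>j<fst (fn n). map (\<lambda>i. M i ! j) [0..<2 * m] \<in> R02 m"
    have dom: "M i \<in> ?A \<union> ?B" if "i < 2*m" for i using rows that by (simp add: fn_def dom_gf)
    have len: "length (M i) = 2*n*n" if "i < 2*m" for i using dom[OF that] by auto
    have dC: "disj (M i) (M (Suc i mod m))" if "i < m" for i
      unfolding disj_def
    proof (intro allI impI)
      fix j assume "j < length (M i)"
      then have "j < fst (fn n)" using len that by (simp add: fn_def)
      then show "\<not> (M i ! j \<and> M (Suc i mod m) ! j)" using col_R02(1)[of M j m] cols that by blast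
    qed
    have dK: "disj (M (m+i)) (M (m+i'))" if "i < m" "i' < m" "i \<noteq> i'" for i i'
      unfolding disj_def
    proof (intro allI impI)
      fix j assume "j < length (M (m+i))"
      then have "j < fst (fn n)" using len that by (simp add: fn_def)
      then show "\<not> (M (m+i) ! j \<and> M (m+i') ! j)" using col_R02(2)[of M j m] cols that by blast
    qed
    have Kdom: "M (m+i) \<in> ?A \<union> ?B" if "i < m" for i using dom that by simp
    have Kinj: "inj_on (\<lambda>i. M (m+i)) {..<m}"
      unfolding inj_on_def using dK self Kdom by (metis lessThan_iff)
    have Kclass: "M (m+i) \<in> ?A \<longleftrightarrow> M m \<in> ?A" if "i < m" for i
    proof (cases "i = 0")
      case False
      have "disj (M (m+i)) (M (m+0))" using dK[of i 0] that False m by simp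
      then show ?thesis using same[of "M (m+i)" "M (m+0)"] Kdom[OF that] Kdom[of 0] m by simp
    qed simp
    have "m < n"
    proof (rule ccontr)
      assume "\<not> m < n"
      then have mn: "n < m" using assms(3) by simp
      have cardm: "card ((\<lambda>i. M (m+i)) ` {..<m}) = m" using card_image[OF Kinj] by simp
      show False
      proof (cases "M m \<in> ?A")
        case True
        then have "(\<lambda>i. M (m+i)) ` {..<m} \<subseteq> ?A" using Kclass by auto
        then have "card ((\<lambda>i. M (m+i)) ` {..<m}) \<le> card ?A" by (intro card_mono) auto
        also have "\<dots> \<le> n" using card_image_le[of "{..<n}" "av n"] by simp
        finally show False using cardm mn by simp
      next
        case False
        then have "(\<lambda>i. M (m+i)) ` {..<m} \<subseteq> ?B" using Kclass Kdom by auto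
        then have "card ((\<lambda>i. M (m+i)) ` {..<m}) \<le> card ?B" by (intro card_mono) auto
        also have "\<dots> \<le> n" using card_image_le[of "{..<n}" "bv n"] by simp
        finally show False using cardm mn by simp
      qed
    qed
    have bidx: "adj n k l" if "k < n" "l < n" "disj (bv n k) (bv n l)" for k l
      using not_disj_bb that by blast
    have Cclass: "M i \<in> ?A \<longleftrightarrow> M 0 \<in> ?A" if "i < m" for i
      using that
    proof (induction i)
      case 0 then show ?case by simp
    next
      case (Suc i)
      have "Suc i mod m = Suc i" using Suc.prems by simp
      then have "disj (M i) (M (Suc i))" using dC[of i] Suc.prems by simp
      then have "M i \<in> ?A \<longleftrightarrow> M (Suc i) \<in> ?A" using same[of "M i" "M (Suc i)"] dom[of i] dom[of "Suc i"] Suc.prems by simp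
      then show ?case using Suc by simp
    qed
    have CA: "M i \<in> ?A" if "i < m" for i
    proof (rule ccontr)
      assume h: "M i \<notin> ?A"
      have M0: "M 0 \<notin> ?A" using Cclass[OF \<open>i < m\<close>] h by simp
      have allB: "M i \<in> ?B" if "i < m" for i
      proof -
        have "M i \<notin> ?A" using M0 Cclass that by blast
        moreover have "M i \<in> ?A \<union> ?B" using dom that by simp
        ultimately show ?thesis by blast
      qed
      define x where "x i = (SOME k. k < n \<and> M (i mod m) = bv n k)" for i
      have x: "x i < n \<and> M (i mod m) = bv n (x i)" for i
      proof -
        have "i mod m < m" using m by simp
        then have "\<exists>k. k < n \<and> M (i mod m) = bv n k" using allB by blast
        then show ?thesis unfolding x_def by (rule someI_ex)
      qed
      have "\<forall>i<m. adj n (x i) (x (Suc i))"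
      proof (intro allI impI)
        fix i assume i: "i < m"
        have "disj (M i) (M (Suc i mod m))" using dC i by simp
        then have "disj (bv n (x i)) (bv n (x (Suc i)))" using x[of i] x[of "Suc i"] i by simp
        then show "adj n (x i) (x (Suc i))" using bidx x by blast
      qed
      moreover have "x m = x 0" unfolding x_def by simp
      ultimately show False by (rule wind[of m n x]) (use m \<open>m < n\<close> in auto)
    qed
    have KA: "M (m+i) \<in> ?A" if "i < m" for i
    proof (rule ccontr)
      assume h: "M (m+i) \<notin> ?A"
      have M0: "M m \<notin> ?A" using Kclass[OF \<open>i < m\<close>] h by simp
      have allB: "M (m+i) \<in> ?B" if "i < m" for i
        using Kclass[OF that] Kdom[OF that] M0 by blast
      have ex: "\<exists>k. k < n \<and> M (m+i) = bv n k" if "i < m" for i using allB[OF that] by blast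
      have m012: "0 < m" "1 < m" "2 < m" using m by auto
      obtain x where x: "x < n" "M (m+0) = bv n x" using ex[OF m012(1)] by blast
      obtain y where y: "y < n" "M (m+1) = bv n y" using ex[OF m012(2)] by blast
      obtain z where z: "z < n" "M (m+2) = bv n z" using ex[OF m012(3)] by blast
      have "disj (M (m+0)) (M (m+1))" using dK[of 0 1] m012 by simp
      then have "adj n x y" using x y bidx by simp
      have "disj (M (m+1)) (M (m+2))" using dK[of 1 2] m012 by simp
      then have "adj n y z" using y z bidx by simp
      have "disj (M (m+0)) (M (m+2))" using dK[of 0 2] m012 by simp
      then have "adj n x z" using x z bidx by simp
      note xyz = x y z \<open>adj n x y\<close> \<open>adj n y z\<close> \<open>adj n x z\<close>
      show False using triangle[of n x y z] xyz \<open>m < n\<close> m by simp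
    qed
    have allA: "M i \<in> ?A" if "i < 2*m" for i
    proof (cases "i < m")
      case True then show ?thesis using CA by simp
    next
      case False then show ?thesis using KA[of "i - m"] that by simp
    qed
    have "map (\<lambda>i. the (snd (fn n) (M i))) [0..<2 * m] = map (\<lambda>i. False) [0..<2 * m]"
    proof (rule map_cong[OF refl])
      fix i assume "i \<in> set [0..<2*m]"
      then obtain k where "k < n" "M i = av n k" using allA by fastforce
      then show "the (snd (fn n) (M i)) = False" by (simp add: fn_def gf_a)
    qed
    then show "map (\<lambda>i. the (snd (fn n) (M i))) [0..<2 * m] \<in> R02 m" using false_R02[of m] by metis
  qed
qed

theorem mainTheorem17:
  fixes X Y :: "nat set"
  assumes "X \<subseteq> Nhat" and "Y \<subseteq> Nhat" and "X \<noteq> {}" and "Y \<noteq> {}"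
  shows "(\<Inter>n\<in>X. pPol (2 * n) (R02 n)) = (\<Inter>m\<in>Y. pPol (2 * m) (R02 m))
         \<longleftrightarrow> X = Y"
proof
  assume eq: "(\<Inter>n\<in>X. pPol (2 * n) (R02 n)) = (\<Inter>m\<in>Y. pPol (2 * m) (R02 m))"
  have sub: "X' \<subseteq> Y'" if "X' \<subseteq> Nhat" "Y' \<subseteq> Nhat"
    "(\<Inter>n\<in>X'. pPol (2 * n) (R02 n)) = (\<Inter>m\<in>Y'. pPol (2 * m) (R02 m))" for X' Y'
  proof
    fix n assume nX: "n \<in> X'"
    show "n \<in> Y'"
    proof (rule ccontr)
      assume nY: "n \<notin> Y'"
      have "fn n \<in> (\<Inter>m\<in>Y'. pPol (2 * m) (R02 m))"
        using fn_in nX nY that by blast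
      moreover have "fn n \<notin> (\<Inter>n\<in>X'. pPol (2 * n) (R02 n))"
        using fn_notin nX that by blast
      ultimately show False using that(3) by simp
    qed
  qed
  show "X = Y" using sub[OF assms(1,2) eq] sub[OF assms(2,1) eq[symmetric]] by blast
qed simp

end
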